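(* Let $f(x|\theta,\sigma,m)=\frac{2}{\sigma}\varphi\!\left(\frac{x-\theta}{\sigma}\right)\Phi\!\left(\frac{m(x-\theta)}{\sigma}\right)$ be the skew-normal density, regarded as a function of $(\theta,v,m)$ with $v=\sigma^2>0$. Then for all $x,\theta\in\mathbb{R}$, $v>0$, $m\in\mathbb{R}$: $$\frac{\partial^2 f}{\partial\theta^2}-2\frac{\partial f}{\partial v}+\frac{m^3+m}{v}\frac{\partial f}{\partial m}=0,\qquad 2m\frac{\partial f}{\partial m}+(m^2+1)\frac{\partial^2 f}{\partial m^2}+2vm\frac{\partial^2 f}{\partial v\,\partial m}=0.$$
   Context: $\varphi$ is the standard normal density and $\Phi$ the standard normal distribution function. *)

theory Defs
  imports "HOL-Probability.Probability"
begin

definition std_normal_cdf :: "real \<Rightarrow> real" where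
  "std_normal_cdf x = (LBINT t:{..x}. std_normal_density t)"

definition skew_normal_density :: "real \<Rightarrow> real \<Rightarrow> real \<Rightarrow> real \<Rightarrow> real" where
  "skew_normal_density x \<theta> \<sigma> m =
     2 / \<sigma> * std_normal_density ((x - \<theta>) / \<sigma>) * std_normal_cdf (m * (x - \<theta>) / \<sigma>)"

definition skew_normal_v :: "real \<Rightarrow> real \<Rightarrow> real \<Rightarrow> real \<Rightarrow> real" where
  "skew_normal_v x \<theta> v m = skew_normal_density x \<theta> (sqrt v) m"

end

theory Submission
  imports Defs
begin


lemma Phi_eq: "std_normal_cdf y = (LBINT t=-\<infinity>..ereal y. std_normal_density t)"
  unfolding std_normal_cdf_def
  by (subst interval_integral_Icc') (auto simp: atMost_def)

lemma phi_int: "interval_lebesgue_integrable lborel a b std_normal_density"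
  unfolding interval_lebesgue_integrable_def set_integrable_def
  apply auto
  by (subst mult.commute, rule integrable_real_mult_indicator, auto)+

lemma Phi_split: "std_normal_cdf y = (LBINT t=-\<infinity>..ereal 0. std_normal_density t) + (LBINT t=ereal 0..y. std_normal_density t)"
  unfolding Phi_eq
  by (rule interval_integral_sum[symmetric]) (rule phi_int)

lemma Phi_deriv: "(std_normal_cdf has_real_derivative std_normal_density y) (at y)"
proof -
  define a where "a = min 0 y - 1"
  define b where "b = max 0 y + 1"
  have c: "continuous_on {a..b} std_normal_density"
    unfolding std_normal_density_def by (intro continuous_intros) auto
  have "((\<lambda>u. LBINT t=ereal 0..u. std_normal_density t) has_vector_derivative std_normal_density y) (at y within {a..b})"
    by (rule interval_integral_FTC2) (use c in \<open>auto simp: a_def b_def\<close>)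
  then have "((\<lambda>u. LBINT t=ereal 0..u. std_normal_density t) has_vector_derivative std_normal_density y) (at y within {a<..<b})"
    by (rule has_vector_derivative_within_subset) auto
  then have "((\<lambda>u. LBINT t=ereal 0..u. std_normal_density t) has_vector_derivative std_normal_density y) (at y)"
    by (subst (asm) has_vector_derivative_within_open) (auto simp: a_def b_def)
  then have "((\<lambda>u. (LBINT t=-\<infinity>..ereal 0. std_normal_density t) + (LBINT t=ereal 0..u. std_normal_density t)) has_real_derivative std_normal_density y) (at y)"
    by (auto intro!: derivative_eq_intros simp: has_real_derivative_iff_has_vector_derivative)
  then show ?thesis
    by (subst (asm) Phi_split[symmetric]) simp
qed

lemma phi_deriv: "(std_normal_density has_real_derivative (- y * std_normal_density y)) (at y)"
  unfolding std_normal_density_def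
  by (auto intro!: derivative_eq_intros simp: field_simps power2_eq_square)

lemma phi_chain[derivative_intros]:
  "(f has_real_derivative f') (at x within S) \<Longrightarrow>
   ((\<lambda>x. std_normal_density (f x)) has_real_derivative (- f x * std_normal_density (f x) * f')) (at x within S)"
  using DERIV_chain2[OF phi_deriv] by blast

lemma Phi_chain[derivative_intros]:
  "(f has_real_derivative f') (at x within S) \<Longrightarrow>
   ((\<lambda>x. std_normal_cdf (f x)) has_real_derivative (std_normal_density (f x) * f')) (at x within S)"
  using DERIV_chain2[OF Phi_deriv] by blast



theorem lemmaF2:
  fixes x \<theta> v m :: real
  assumes "v > 0"
  shows "(deriv (\<lambda>t. deriv (\<lambda>s. skew_normal_v x s v m) t) \<theta>
           - 2 * deriv (\<lambda>w. skew_normal_v x \<theta> w m) v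
           + (m ^ 3 + m) / v * deriv (\<lambda>n. skew_normal_v x \<theta> v n) m = 0)
         \<and> (2 * m * deriv (\<lambda>n. skew_normal_v x \<theta> v n) m
           + (m\<^sup>2 + 1) * deriv (\<lambda>k. deriv (\<lambda>n. skew_normal_v x \<theta> v n) k) m
           + 2 * v * m * deriv (\<lambda>w. deriv (\<lambda>n. skew_normal_v x \<theta> w n) m) v = 0)"
proof -
  define s where "s = sqrt v"
  have s0: "s > 0" using assms by (simp add: s_def)
  have vs: "v = s^2" using assms by (simp add: s_def)
  define a where "a = (x - \<theta>) / s"
  define A where "A = std_normal_density ((x - \<theta>) / s)"
  define B where "B = std_normal_density (m * (x - \<theta>) / s)"
  define C where "C = std_normal_cdf (m * (x - \<theta>) / s)"
  define F1 where "F1 = (\<lambda>t. 2/s^2 * ((x-t)/s * std_normal_density ((x-t)/s) * std_normal_cdf (m*(x-t)/s)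
        - m * std_normal_density ((x-t)/s) * std_normal_density (m*(x-t)/s)))"
  have d1: "((\<lambda>t. skew_normal_v x t v m) has_real_derivative F1 t) (at t)" for t
    unfolding skew_normal_v_def skew_normal_density_def F1_def s_def[symmetric]
    using s0 by (auto intro!: derivative_eq_intros simp: field_simps power2_eq_square power3_eq_cube)
  have e1: "deriv (\<lambda>t. deriv (\<lambda>s. skew_normal_v x s v m) t) \<theta> = deriv F1 \<theta>"
    using d1 DERIV_imp_deriv by metis
  have d2: "(F1 has_real_derivative 2/s^3 * (-A*C + a^2*A*C - 2*m*a*A*B - m^3*a*A*B)) (at \<theta>)"
    unfolding F1_def A_def B_def C_def a_def
    using s0 by (auto intro!: derivative_eq_intros simp: field_simps power2_eq_square power3_eq_cube)
  have dh: "((\<lambda>\<sigma>. 2/\<sigma> * std_normal_density ((x-\<theta>)/\<sigma>) * std_normal_cdf (m*(x-\<theta>)/\<sigma>))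
      has_real_derivative 2/s^2*(-A*C + a^2*A*C - m*a*A*B)) (at s)"
    unfolding A_def B_def C_def a_def
    using s0 by (auto intro!: derivative_eq_intros simp: field_simps power2_eq_square power3_eq_cube)
  have d3: "((\<lambda>w. skew_normal_v x \<theta> w m) has_real_derivative 1/s^3 * (-A*C + a^2*A*C - m*a*A*B)) (at v)"
  proof -
    have "((\<lambda>w. skew_normal_v x \<theta> w m) has_real_derivative 2/s^2*(-A*C + a^2*A*C - m*a*A*B) * (inverse (sqrt v) / 2)) (at v)"
      using DERIV_chain2[OF dh[unfolded s_def] DERIV_real_sqrt[OF assms]]
      unfolding skew_normal_v_def skew_normal_density_def s_def by simp
    moreover have "2/s^2*(-A*C + a^2*A*C - m*a*A*B) * (inverse (sqrt v) / 2) = 1/s^3 * (-A*C + a^2*A*C - m*a*A*B)"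
      using s0 by (simp add: s_def[symmetric] field_simps power3_eq_cube power2_eq_square)
    ultimately show ?thesis by simp
  qed
  have dH: "((\<lambda>n. skew_normal_v x \<theta> w n) has_real_derivative
      2/sqrt w * std_normal_density ((x-\<theta>)/sqrt w) * std_normal_density (n*(x-\<theta>)/sqrt w) * ((x-\<theta>)/sqrt w)) (at n)" for w n
  proof (cases "sqrt w = 0")
    case True
    then show ?thesis unfolding skew_normal_v_def skew_normal_density_def by simp
  next
    case False
    have g: "((\<lambda>n. 2/\<sigma> * std_normal_density ((x-\<theta>)/\<sigma>) * std_normal_cdf (n*(x-\<theta>)/\<sigma>)) has_real_derivative
      2/\<sigma> * std_normal_density ((x-\<theta>)/\<sigma>) * std_normal_density (n*(x-\<theta>)/\<sigma>) * ((x-\<theta>)/\<sigma>)) (at n)"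
      if "\<sigma> \<noteq> 0" for \<sigma> :: real
      using that by (auto intro!: derivative_eq_intros simp: field_simps)
    show ?thesis unfolding skew_normal_v_def skew_normal_density_def
      by (rule g[OF False])
  qed
  have eH: "deriv (\<lambda>n. skew_normal_v x \<theta> w n) = (\<lambda>n.
      2/sqrt w * std_normal_density ((x-\<theta>)/sqrt w) * std_normal_density (n*(x-\<theta>)/sqrt w) * ((x-\<theta>)/sqrt w))" for w
    using dH DERIV_imp_deriv by blast
  have d4: "((\<lambda>n. 2/s * A * std_normal_density (n*(x-\<theta>)/s) * a) has_real_derivative -(2/s)*m*a^3*A*B) (at m)"
    unfolding A_def B_def a_def
    using s0 by (auto intro!: derivative_eq_intros simp: field_simps power2_eq_square power3_eq_cube)
  have dk: "((\<lambda>\<sigma>. 2/\<sigma> * std_normal_density ((x-\<theta>)/\<sigma>) * std_normal_density (m*(x-\<theta>)/\<sigma>) * ((x-\<theta>)/\<sigma>))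
      has_real_derivative 2/s^2 * A*B*(a^3*(1+m^2) - 2*a)) (at s)"
    unfolding A_def B_def C_def a_def
    using s0 by (auto intro!: derivative_eq_intros simp: field_simps power2_eq_square power3_eq_cube)
  have d5: "((\<lambda>w. deriv (\<lambda>n. skew_normal_v x \<theta> w n) m) has_real_derivative 1/s^3 * A*B*(a^3*(1+m^2) - 2*a)) (at v)"
  proof -
    have "((\<lambda>w. deriv (\<lambda>n. skew_normal_v x \<theta> w n) m) has_real_derivative 2/s^2 * A*B*(a^3*(1+m^2) - 2*a) * (inverse (sqrt v) / 2)) (at v)"
      using DERIV_chain2[OF dk[unfolded s_def] DERIV_real_sqrt[OF assms]]
      unfolding eH s_def by simp
    moreover have "2/s^2 * A*B*(a^3*(1+m^2) - 2*a) * (inverse (sqrt v) / 2) = 1/s^3 * A*B*(a^3*(1+m^2) - 2*a)"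
      using s0 by (simp add: s_def[symmetric] field_simps power3_eq_cube power2_eq_square)
    ultimately show ?thesis by simp
  qed
  have H1: "deriv (\<lambda>n. skew_normal_v x \<theta> v n) m = 2/s * A * B * a"
    unfolding eH A_def B_def a_def s_def by simp
  have H2: "deriv (\<lambda>k. deriv (\<lambda>n. skew_normal_v x \<theta> v n) k) m = -(2/s)*m*a^3*A*B"
    unfolding eH s_def[symmetric] using d4 DERIV_imp_deriv unfolding A_def a_def by simp
  show ?thesis
    unfolding e1 DERIV_imp_deriv[OF d2] DERIV_imp_deriv[OF d3] DERIV_imp_deriv[OF d5] H1 H2
    using s0 vs by (simp add: field_simps power2_eq_square power3_eq_cube)
qed


end
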